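(* Let $N\ge1$, $K\ge2$ be integers and let $\alpha\ge\frac{2(K-1)}{K}$. Then for every pure strategy $s\in S$, the profile $(s,s)$ is a Nash equilibrium of $\mathcal{B}_\alpha(N,K)$.
   Context: Fix integers $N\ge1$, $K\ge2$ and a real number $\alpha$. The Colonel Blotto game $\mathcal{B}_\alpha(N,K)$ is the two-player simultaneous-move game with players $A,B$, each with pure strategy set $S=\{s\in\{0,1,\ldots,N\}^K:\sum_{k=1}^K s_k=N\}$, in which the payoff of player $i$ at the pure profile $(s^i,s^{-i})$ is $\pi^i(s^i,s^{-i})=\sum_{k=1}^K\big(\mathbf 1[s^i_k>s^{-i}_k]+\tfrac{\alpha}{2}\mathbf 1[s^i_k=s^{-i}_k]\big)$. Mixed strategies are probability distributions on $S$, with expected payoffs under independent randomization; a Nash equilibrium is a mixed profile from which no unilateral deviation raises a player's expected payoff. *)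

theory Defs
  imports Complex_Main
begin

definition blotto_S :: "nat \<Rightarrow> nat \<Rightarrow> (nat \<Rightarrow> nat) set" where
  "blotto_S N K = {s. (\<forall>k\<ge>K. s k = 0) \<and> (\<Sum>k<K. s k) = N}"

definition blotto_payoff :: "nat \<Rightarrow> real \<Rightarrow> (nat \<Rightarrow> nat) \<Rightarrow> (nat \<Rightarrow> nat) \<Rightarrow> real" where
  "blotto_payoff K \<alpha> x y =
     (\<Sum>k<K. (if x k > y k then 1 else 0) + \<alpha> / 2 * (if x k = y k then 1 else 0))"

definition blotto_mixed :: "nat \<Rightarrow> nat \<Rightarrow> ((nat \<Rightarrow> nat) \<Rightarrow> real) set" where
  "blotto_mixed N K = {\<sigma>. (\<forall>x. \<sigma> x \<ge> 0) \<and> (\<forall>x. x \<notin> blotto_S N K \<longrightarrow> \<sigma> x = 0)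
                          \<and> (\<Sum>x\<in>blotto_S N K. \<sigma> x) = 1}"

definition payoff_A :: "nat \<Rightarrow> nat \<Rightarrow> real \<Rightarrow> ((nat \<Rightarrow> nat) \<Rightarrow> real) \<Rightarrow> ((nat \<Rightarrow> nat) \<Rightarrow> real) \<Rightarrow> real" where
  "payoff_A N K \<alpha> \<sigma> \<tau> =
     (\<Sum>a\<in>blotto_S N K. \<Sum>b\<in>blotto_S N K. \<sigma> a * \<tau> b * blotto_payoff K \<alpha> a b)"

definition payoff_B :: "nat \<Rightarrow> nat \<Rightarrow> real \<Rightarrow> ((nat \<Rightarrow> nat) \<Rightarrow> real) \<Rightarrow> ((nat \<Rightarrow> nat) \<Rightarrow> real) \<Rightarrow> real" where
  "payoff_B N K \<alpha> \<sigma> \<tau> =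
     (\<Sum>a\<in>blotto_S N K. \<Sum>b\<in>blotto_S N K. \<sigma> a * \<tau> b * blotto_payoff K \<alpha> b a)"

definition blotto_nash :: "nat \<Rightarrow> nat \<Rightarrow> real \<Rightarrow> ((nat \<Rightarrow> nat) \<Rightarrow> real) \<Rightarrow> ((nat \<Rightarrow> nat) \<Rightarrow> real) \<Rightarrow> bool" where
  "blotto_nash N K \<alpha> \<sigma> \<tau> \<longleftrightarrow>
     \<sigma> \<in> blotto_mixed N K \<and> \<tau> \<in> blotto_mixed N K \<and>
     (\<forall>\<sigma>'\<in>blotto_mixed N K. payoff_A N K \<alpha> \<sigma>' \<tau> \<le> payoff_A N K \<alpha> \<sigma> \<tau>) \<and>
     (\<forall>\<tau>'\<in>blotto_mixed N K. payoff_B N K \<alpha> \<sigma> \<tau>' \<le> payoff_B N K \<alpha> \<sigma> \<tau>)"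

definition pure_strategy :: "(nat \<Rightarrow> nat) \<Rightarrow> ((nat \<Rightarrow> nat) \<Rightarrow> real)" where
  "pure_strategy s = (\<lambda>x. if x = s then 1 else 0)"

end

theory Submission
  imports Defs
begin

lemma finite_S: "finite (blotto_S N K)"
proof -
  have "blotto_S N K \<subseteq> {f. \<forall>x. (x \<in> {..<K} \<longrightarrow> f x \<in> {..N}) \<and> (x \<notin> {..<K} \<longrightarrow> f x = 0)}"
  proof
    fix f assume f: "f \<in> blotto_S N K"
    { fix x assume x: "x < K"
      have "f x \<le> (\<Sum>k<K. f k)" using x by (intro member_le_sum) auto
      hence "f x \<le> N" using f by (simp add: blotto_S_def) }
    then show "f \<in> {f. \<forall>x. (x \<in> {..<K} \<longrightarrow> f x \<in> {..N}) \<and> (x \<notin> {..<K} \<longrightarrow> f x = 0)}"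
      using f by (auto simp: blotto_S_def)
  qed
  moreover have "finite {f::nat\<Rightarrow>nat. \<forall>x. (x \<in> {..<K} \<longrightarrow> f x \<in> {..N}) \<and> (x \<notin> {..<K} \<longrightarrow> f x = 0)}"
    by (rule finite_set_of_finite_funs) auto
  ultimately show ?thesis by (rule finite_subset)
qed

lemma self_payoff: "blotto_payoff K \<alpha> s s = real K * \<alpha> / 2"
  by (simp add: blotto_payoff_def)

lemma exists_loss:
  assumes x: "x \<in> blotto_S N K" and s: "s \<in> blotto_S N K" and ne: "x \<noteq> s"
  shows "\<exists>k<K. x k < s k"
proof (rule ccontr)
  assume "\<not> ?thesis"
  hence le: "\<forall>k<K. s k \<le> x k" by auto
  have eqsum: "(\<Sum>k<K. s k) = (\<Sum>k<K. x k)" using x s by (simp add: blotto_S_def)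
  have "\<forall>k<K. s k = x k"
  proof (rule ccontr)
    assume "\<not> (\<forall>k<K. s k = x k)"
    then obtain k where "k < K" "s k < x k" using le by force
    hence "(\<Sum>k<K. s k) < (\<Sum>k<K. x k)"
      using le by (intro sum_strict_mono_ex1) auto
    thus False using eqsum by simp
  qed
  moreover have "\<forall>k\<ge>K. s k = x k" using x s by (simp add: blotto_S_def)
  ultimately have "x = s" by (metis ext not_le)
  thus False using ne by simp
qed

lemma dev_payoff:
  assumes x: "x \<in> blotto_S N K" and s: "s \<in> blotto_S N K"
    and K: "K \<ge> 2" and a: "\<alpha> \<ge> 2 * (real K - 1) / real K"
  shows "blotto_payoff K \<alpha> x s \<le> real K * \<alpha> / 2"
proof (cases "x = s")
  case True thus ?thesis by (simp add: self_payoff)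
next
  case False
  then obtain k0 where k0: "k0 < K" "x k0 < s k0" using exists_loss[OF x s] by blast
  have Kpos: "real K > 0" using K by simp
  have "2 * (real K - 1) / real K \<ge> 0" using K by simp
  hence a0: "\<alpha> \<ge> 0" using a by linarith
  have aK: "\<alpha> * real K \<ge> 2 * (real K - 1)" using a Kpos by (simp add: divide_le_eq)
  define c where "c = max 1 (\<alpha>/2)"
  define f where "f k = (if x k > s k then 1 else 0) + \<alpha> / 2 * (if x k = s k then 1 else 0)" for k
  have fle: "f k \<le> c" for k using a0 by (auto simp: f_def c_def)
  have f0: "f k0 = 0" using k0 by (simp add: f_def)
  have "blotto_payoff K \<alpha> x s = (\<Sum>k<K. f k)" by (simp add: blotto_payoff_def f_def)
  also have "\<dots> = f k0 + (\<Sum>k\<in>{..<K}-{k0}. f k)"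
    using k0 by (subst sum.remove[of _ k0]) auto
  also have "\<dots> \<le> 0 + (\<Sum>k\<in>{..<K}-{k0}. c)"
    using f0 fle by (intro add_mono sum_mono) auto
  also have "\<dots> = (real K - 1) * c" using k0 by (simp add: of_nat_diff)
  also have "\<dots> \<le> real K * \<alpha> / 2"
  proof (cases "\<alpha> \<ge> 2")
    case True
    hence "c = \<alpha>/2" by (simp add: c_def)
    have "(real K - 1) * (\<alpha>/2) = real K * \<alpha> / 2 - \<alpha>/2" by (simp add: field_simps)
    thus ?thesis unfolding \<open>c = \<alpha>/2\<close> using a0 by linarith
  next
    case False
    hence "c = 1" by (simp add: c_def)
    thus ?thesis using aK by (simp add: field_simps)
  qed
  finally show ?thesis .
qed

theorem proposition6:
  fixes N K :: nat and \<alpha> :: real and s :: "nat \<Rightarrow> nat"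
  assumes "N \<ge> 1" and "K \<ge> 2"
    and "\<alpha> \<ge> 2 * (real K - 1) / real K"
    and "s \<in> blotto_S N K"
  shows "blotto_nash N K \<alpha> (pure_strategy s) (pure_strategy s)"
proof -
  have fin: "finite (blotto_S N K)" by (rule finite_S)
  have pm: "pure_strategy s \<in> blotto_mixed N K"
    using assms(4) fin by (simp add: blotto_mixed_def pure_strategy_def sum.delta)
  have pure_sum: "(\<Sum>b\<in>blotto_S N K. pure_strategy s b * g b) = g s" for g :: "_ \<Rightarrow> real"
  proof -
    have "(\<Sum>b\<in>blotto_S N K. pure_strategy s b * g b) = (\<Sum>b\<in>blotto_S N K. if b = s then g b else 0)"
      by (rule sum.cong) (auto simp: pure_strategy_def)
    also have "\<dots> = g s" using assms(4) fin by (simp add: sum.delta')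
    finally show ?thesis .
  qed
  have base: "(\<Sum>a\<in>blotto_S N K. \<sigma> a * blotto_payoff K \<alpha> a s) \<le> real K * \<alpha> / 2"
    if "\<sigma> \<in> blotto_mixed N K" for \<sigma>
  proof -
    have "(\<Sum>a\<in>blotto_S N K. \<sigma> a * blotto_payoff K \<alpha> a s)
        \<le> (\<Sum>a\<in>blotto_S N K. \<sigma> a * (real K * \<alpha> / 2))"
      using that dev_payoff[OF _ assms(4) assms(2) assms(3)]
      by (intro sum_mono mult_left_mono) (auto simp: blotto_mixed_def)
    also have "\<dots> = real K * \<alpha> / 2"
      using that by (simp add: sum_distrib_right[symmetric] blotto_mixed_def del: times_divide_eq_right)
    finally show ?thesis .
  qed
  have pA: "payoff_A N K \<alpha> \<sigma> (pure_strategy s) = (\<Sum>a\<in>blotto_S N K. \<sigma> a * blotto_payoff K \<alpha> a s)" for \<sigma>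
    unfolding payoff_A_def
    by (rule sum.cong[OF refl]) (simp add: mult.assoc[symmetric] mult.commute[of "\<sigma> _"] pure_sum[where g="\<lambda>b. \<sigma> _ * blotto_payoff K \<alpha> _ b", simplified mult.assoc[symmetric]])
  have pB: "payoff_B N K \<alpha> (pure_strategy s) \<tau> = (\<Sum>b\<in>blotto_S N K. \<tau> b * blotto_payoff K \<alpha> b s)" for \<tau>
  proof -
    have "payoff_B N K \<alpha> (pure_strategy s) \<tau> = (\<Sum>a\<in>blotto_S N K. pure_strategy s a * (\<Sum>b\<in>blotto_S N K. \<tau> b * blotto_payoff K \<alpha> b a))"
      unfolding payoff_B_def by (simp add: sum_distrib_left mult.assoc)
    also have "\<dots> = (\<Sum>b\<in>blotto_S N K. \<tau> b * blotto_payoff K \<alpha> b s)" by (rule pure_sum)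
    finally show ?thesis .
  qed
  have selfA: "payoff_A N K \<alpha> (pure_strategy s) (pure_strategy s) = real K * \<alpha> / 2"
    using pA pure_sum self_payoff by simp
  have selfB: "payoff_B N K \<alpha> (pure_strategy s) (pure_strategy s) = real K * \<alpha> / 2"
    using pB pure_sum self_payoff by simp
  show ?thesis unfolding blotto_nash_def
  proof (intro conjI ballI pm)
    fix \<sigma>' assume "\<sigma>' \<in> blotto_mixed N K"
    thus "payoff_A N K \<alpha> \<sigma>' (pure_strategy s) \<le> payoff_A N K \<alpha> (pure_strategy s) (pure_strategy s)"
      unfolding selfA pA[of \<sigma>'] by (rule base)
  next
    fix \<tau>' assume "\<tau>' \<in> blotto_mixed N K"
    thus "payoff_B N K \<alpha> (pure_strategy s) \<tau>' \<le> payoff_B N K \<alpha> (pure_strategy s) (pure_strategy s)"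
      unfolding selfB pB[of \<tau>'] by (rule base)
  qed
qed

end
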